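(* For $n\ge1$ let $a_n$ be the number of equivalence classes of period configurations of Parallel Diffusion on the unlabelled complete graph $K_n$. Then $a_1=1$, $a_2=2$, $a_3=6$, $a_4=19$, and $a_n=5a_{n-1}-7a_{n-2}+4a_{n-3}$ for all $n\ge5$.
   Context: Parallel Diffusion on a graph $G$: a configuration assigns an integer stack size $|v|$ to each vertex. One firing step replaces every stack size simultaneously by $|v| + \#\{u\in N(v): |u|>|v|\} - \#\{u\in N(v): |u|<|v|\}$. A period configuration is a configuration $D$ such that repeated firing starting from $D$ returns to $D$ after some positive number of steps. On the complete graph $K_n$ with unlabelled vertices, a configuration is a multiset of $n$ integers. Two configurations are equivalent if one is obtained from the other by adding the same integer to every stack size. *)

theory Defs
  imports Main "HOL-Library.Multiset"
begin

text \<open>A configuration is a multiset of n integers (stack sizes).  In K_n every other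
  vertex is a neighbour; vertices with equal stack size contribute nothing, so
  counting over the whole multiset is the same as counting over the neighbours.\<close>

definition pd_fire :: "int multiset \<Rightarrow> int multiset" where
  "pd_fire M = image_mset
     (\<lambda>x. x + int (size (filter_mset (\<lambda>y. y > x) M))
            - int (size (filter_mset (\<lambda>y. y < x) M))) M"

definition pd_period_config :: "int multiset \<Rightarrow> bool" where
  "pd_period_config D \<longleftrightarrow> (\<exists>k>0. (pd_fire ^^ k) D = D)"

definition pd_equiv :: "(int multiset \<times> int multiset) set" where
  "pd_equiv = {(M, N). \<exists>c::int. N = image_mset (\<lambda>x. x + c) M}"

definition pd_period_configs :: "nat \<Rightarrow> int multiset set" where
  "pd_period_configs n = {D. size D = n \<and> pd_period_config D}"

definition pd_count :: "nat \<Rightarrow> nat" where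
  "pd_count n = card (pd_period_configs n // pd_equiv)"

end

theory Submission
  imports Defs "HOL-Computational_Algebra.Formal_Power_Series"
begin


definition mv :: "(nat \<Rightarrow> int) \<Rightarrow> nat \<Rightarrow> int multiset" where
  "mv x n = image_mset x (mset_set {..<n})"

definition dd :: "(nat \<Rightarrow> int) \<Rightarrow> nat \<Rightarrow> nat \<Rightarrow> int" where
  "dd x n i = (\<Sum>j<n. sgn (x j - x i))"

definition step :: "(nat \<Rightarrow> int) \<Rightarrow> nat \<Rightarrow> nat \<Rightarrow> int" where
  "step x n i = x i + dd x n i"

lemma size_diff_sgn:
  "int (size {#y \<in># M. u < y#}) - int (size {#y \<in># M. y < u#}) = (\<Sum>y\<in>#M. sgn (y - u))"
  by (induction M) auto

lemma sum_mset_mv: "(\<Sum>y\<in>#mv x n. f y) = (\<Sum>j<n. f (x j))"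
  unfolding mv_def by (simp add: sum_unfold_sum_mset image_mset.compositionality o_def)

lemma fire_mv: "pd_fire (mv x n) = mv (step x n) n"
proof -
  have "pd_fire (mv x n) = image_mset (\<lambda>u. u + (\<Sum>y\<in>#mv x n. sgn (y - u))) (mv x n)"
    unfolding pd_fire_def using size_diff_sgn by (metis add_diff_eq)
  also have "\<dots> = mv (step x n) n"
    unfolding sum_mset_mv by (simp add: mv_def image_mset.compositionality o_def step_def[abs_def] dd_def)
  finally show ?thesis .
qed

lemma mv_exists: "\<exists>x. M = mv x (size M)"
proof -
  obtain xs where "M = mset xs" by (metis ex_mset)
  then have "M = mv (\<lambda>i. xs ! i) (size M)"
    unfolding mv_def by (metis map_nth mset_map mset_upt size_mset lessThan_atLeast0)
  then show ?thesis by blast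
qed


lemma sgn_swap: "sgn (a - b) = - sgn (b - a)" for a b :: int
  by (cases a b rule: linorder_cases) auto

lemma sum_dd: "(\<Sum>i<n. dd x n i) = 0"
proof -
  have "(\<Sum>i<n. dd x n i) = (\<Sum>i<n. \<Sum>j<n. sgn (x j - x i))" by (simp add: dd_def)
  also have "\<dots> = (\<Sum>j<n. \<Sum>i<n. sgn (x j - x i))" by (rule sum.swap)
  also have "\<dots> = - (\<Sum>j<n. \<Sum>i<n. sgn (x i - x j))"
    by (simp only: sum_negf[symmetric]) (intro sum.cong refl, rule sgn_swap)
  finally show ?thesis
    by (metis (no_types, lifting) dd_def equal_neg_zero sum.cong)
qed


lemma neg_double: assumes "\<And>i j. f i j = - g i j"
  shows "(\<Sum>i<n. \<Sum>j<n. f i j) = - (\<Sum>i<n. \<Sum>j<n. (g i j :: int))"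
  by (simp add: assms sum_negf)

lemma sgn_mul_neg: "(a - b) * sgn (b - a) = - \<bar>a - b\<bar>" for a b :: int
  by (cases a b rule: linorder_cases) auto

lemma sum_x_dd: "2 * (\<Sum>i<n. x i * dd x n i) = - (\<Sum>i<n. \<Sum>j<n. \<bar>x i - x j\<bar>)"
proof -
  have A: "(\<Sum>i<n. x i * dd x n i) = (\<Sum>i<n. \<Sum>j<n. x i * sgn (x j - x i))"
    by (simp add: dd_def sum_distrib_left)
  have B: "(\<Sum>i<n. \<Sum>j<n. x i * sgn (x j - x i)) = (\<Sum>i<n. \<Sum>j<n. x j * sgn (x i - x j))"
    by (rule sum.swap)
  have C: "(\<Sum>i<n. \<Sum>j<n. x j * sgn (x i - x j)) = - (\<Sum>i<n. \<Sum>j<n. x j * sgn (x j - x i))"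
    by (rule neg_double) (metis sgn_swap mult_minus_right mult_minus_left)
  have "2 * (\<Sum>i<n. x i * dd x n i) = (\<Sum>i<n. \<Sum>j<n. x i * sgn (x j - x i)) - (\<Sum>i<n. \<Sum>j<n. x j * sgn (x j - x i))"
    using A B C by simp
  also have "\<dots> = (\<Sum>i<n. \<Sum>j<n. (x i - x j) * sgn (x j - x i))"
    by (simp add: sum_subtractf[symmetric] left_diff_distrib)
  also have "\<dots> = - (\<Sum>i<n. \<Sum>j<n. \<bar>x i - x j\<bar>)"
    by (simp add: sgn_mul_neg sum_negf)
  finally show ?thesis .
qed

lemma double_prod:
  fixes p q :: "nat \<Rightarrow> int"
  shows "(\<Sum>i<n. \<Sum>j<n. (p i - p j) * (q i - q j)) = 2 * int n * (\<Sum>i<n. p i * q i) - 2 * (\<Sum>i<n. p i) * (\<Sum>i<n. q i)"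
proof -
  have "(\<Sum>i<n. \<Sum>j<n. (p i - p j) * (q i - q j)) =
     (\<Sum>i<n. \<Sum>j<n. p i * q i) + (\<Sum>i<n. \<Sum>j<n. p j * q j) - (\<Sum>i<n. \<Sum>j<n. p i * q j) - (\<Sum>i<n. \<Sum>j<n. p j * q i)"
    by (simp add: algebra_simps sum.distrib sum_subtractf)
  also have "\<dots> = 2 * int n * (\<Sum>i<n. p i * q i) - 2 * (\<Sum>i<n. p i) * (\<Sum>i<n. q i)"
    by (simp add: sum_distrib_left sum_distrib_right sum.swap[of "\<lambda>i j. p j * q i"] algebra_simps)
  finally show ?thesis .
qed

definition WW :: "(nat \<Rightarrow> int) \<Rightarrow> nat \<Rightarrow> int" where
  "WW x n = (\<Sum>i<n. \<Sum>j<n. (x i - x j)^2)"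
definition S1 :: "(nat \<Rightarrow> int) \<Rightarrow> nat \<Rightarrow> int" where
  "S1 x n = (\<Sum>i<n. \<Sum>j<n. \<bar>x i - x j\<bar>)"
definition D2 :: "(nat \<Rightarrow> int) \<Rightarrow> nat \<Rightarrow> int" where
  "D2 x n = (\<Sum>i<n. (dd x n i)^2)"

lemma W_step: "WW (step x n) n = WW x n - 2 * int n * S1 x n + 2 * int n * D2 x n"
proof -
  let ?d = "dd x n"
  have "WW (step x n) n = (\<Sum>i<n. \<Sum>j<n. (x i - x j)^2 + 2 * ((x i - x j) * (?d i - ?d j)) + (?d i - ?d j) * (?d i - ?d j))"
    unfolding WW_def step_def by (intro sum.cong refl) (simp add: power2_eq_square algebra_simps)
  also have "\<dots> = WW x n + 2 * (\<Sum>i<n. \<Sum>j<n. (x i - x j) * (?d i - ?d j)) + (\<Sum>i<n. \<Sum>j<n. (?d i - ?d j) * (?d i - ?d j))"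
    by (simp add: WW_def sum.distrib sum_distrib_left)
  also have "\<dots> = WW x n - 2 * int n * S1 x n + 2 * int n * D2 x n"
    unfolding double_prod sum_dd D2_def S1_def using sum_x_dd[of x n]
    by (simp add: power2_eq_square algebra_simps)
  finally show ?thesis .
qed

lemma dd_mono: assumes "i < n" "x i < x j" shows "dd x n j < dd x n i"
proof -
  have "dd x n i - dd x n j = (\<Sum>k<n. sgn (x k - x i) - sgn (x k - x j))"
    by (simp add: dd_def sum_subtractf)
  also have "\<dots> > 0"
  proof (rule sum_pos2[where i=i])
    show "0 < sgn (x i - x i) - sgn (x i - x j)" using assms by simp
    show "\<And>k. k \<in> {..<n} \<Longrightarrow> 0 \<le> sgn (x k - x i) - sgn (x k - x j)"
      using assms by (auto simp: sgn_if)
  qed (use assms in auto)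
  finally show ?thesis by simp
qed

lemma abs_dd_sgn: assumes "i < n" "j < n"
  shows "\<bar>dd x n i - dd x n j\<bar> = sgn (x j - x i) * (dd x n i - dd x n j)"
  using dd_mono[of i n x j] dd_mono[of j n x i] assms
  by (cases "x i" "x j" rule: linorder_cases) (auto simp: dd_def)

lemma sum_abs_dd: "(\<Sum>i<n. \<Sum>j<n. \<bar>dd x n i - dd x n j\<bar>) = 2 * D2 x n"
proof -
  have "(\<Sum>i<n. \<Sum>j<n. \<bar>dd x n i - dd x n j\<bar>) =
        (\<Sum>i<n. \<Sum>j<n. sgn (x j - x i) * dd x n i) - (\<Sum>i<n. \<Sum>j<n. sgn (x j - x i) * dd x n j)"
    by (simp add: abs_dd_sgn sum_subtractf[symmetric] right_diff_distrib)
  also have "(\<Sum>i<n. \<Sum>j<n. sgn (x j - x i) * dd x n i) = D2 x n"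
    by (simp add: D2_def dd_def power2_eq_square sum_distrib_right)
  also have "(\<Sum>i<n. \<Sum>j<n. sgn (x j - x i) * dd x n j) = (\<Sum>j<n. \<Sum>i<n. sgn (x j - x i) * dd x n j)"
    by (rule sum.swap)
  also have "\<dots> = - (\<Sum>j<n. \<Sum>i<n. sgn (x i - x j) * dd x n j)"
    by (rule neg_double) (metis sgn_swap mult_minus_right mult_minus_left)
  also have "\<dots> = - D2 x n"
    by (simp add: D2_def dd_def power2_eq_square sum_distrib_right)
  finally show ?thesis by simp
qed


definition ddS :: "(nat \<Rightarrow> int) \<Rightarrow> nat set \<Rightarrow> int \<Rightarrow> int" where
  "ddS x I v = (\<Sum>j\<in>I. sgn (x j - v))"

definition cnt :: "(nat \<Rightarrow> int) \<Rightarrow> nat set \<Rightarrow> int \<Rightarrow> int" where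
  "cnt x I v = int (card {j\<in>I. x j = v})"

lemma sum_ddS: "(\<Sum>i\<in>I. ddS x I (x i)) = 0"
proof -
  have "(\<Sum>i\<in>I. ddS x I (x i)) = (\<Sum>i\<in>I. \<Sum>j\<in>I. sgn (x j - x i))" by (simp add: ddS_def)
  also have "\<dots> = (\<Sum>j\<in>I. \<Sum>i\<in>I. sgn (x j - x i))" by (rule sum.swap)
  also have "\<dots> = - (\<Sum>j\<in>I. \<Sum>i\<in>I. sgn (x i - x j))"
    by (simp add: sum_negf[symmetric]) (intro sum.cong refl, rule sgn_swap)
  finally show ?thesis
    by (simp add: ddS_def)
qed

lemma sum_e: "(\<Sum>i\<in>I. (if x i = v then 1 else 0) * f (x i)) = cnt x I v * f v" if "finite I" for f :: "int \<Rightarrow> int"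
proof -
  have "(\<Sum>i\<in>I. (if x i = v then 1 else 0) * f (x i)) = (\<Sum>i\<in>I. if x i = v then f v else 0)"
    by (intro sum.cong) auto
  also have "\<dots> = (\<Sum>i\<in>{j\<in>I. x j = v}. f v)"
    using that by (simp add: sum.inter_filter[symmetric])
  also have "\<dots> = cnt x I v * f v" by (simp add: cnt_def)
  finally show ?thesis .
qed

lemma D2S:
  assumes "finite I"
  shows "3 * (\<Sum>i\<in>I. (ddS x I (x i))^2) = (int (card I))^3 - (\<Sum>i\<in>I. (cnt x I (x i))^2)"
  using assms
proof (induction I rule: finite_ranking_induct[where f = x])
  case empty then show ?case by simp
next
  case (insert z I)
  show ?case
  proof (cases "z \<in> I")
    case True then show ?thesis using insert by (simp add: insert_absorb)
  next
    case False
    define n where "n = int (card I)"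
    define c where "c = cnt x I (x z)"
    define e where "e = (\<lambda>i. if x i = x z then 1 else (0::int))"
    have cardI': "int (card (insert z I)) = n + 1" using False insert by (simp add: n_def)
    have dz: "ddS x I (x z) = c - n"
    proof -
      have "ddS x I (x z) = (\<Sum>j\<in>I. e j - 1)"
        unfolding ddS_def e_def using insert(2) by (intro sum.cong) (force simp: sgn_if)+
      also have "\<dots> = (\<Sum>j\<in>I. e j * 1) - n"
        by (simp add: sum_subtractf n_def)
      also have "(\<Sum>j\<in>I. e j * 1) = c"
        using sum_e[OF insert(1), of x "x z" "\<lambda>_. 1"] by (simp add: e_def c_def)
      finally show ?thesis .
    qed
    have dI: "ddS x (insert z I) v = ddS x I v + sgn (x z - v)" for v
      using False insert(1) by (simp add: ddS_def)
    have cI: "cnt x (insert z I) v = cnt x I v + (if x z = v then 1 else 0)" for v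
    proof -
      have "{j \<in> insert z I. x j = v} = (if x z = v then insert z {j\<in>I. x j = v} else {j\<in>I. x j = v})"
        by auto
      then show ?thesis using False insert(1) by (simp add: cnt_def)
    qed
    have sgn_e: "sgn (x z - x i) = 1 - e i" if "i \<in> I" for i
      using insert(2)[OF that] by (auto simp: e_def sgn_if)
    have S0: "(\<Sum>i\<in>I. ddS x I (x i)) = 0" by (rule sum_ddS)
    have Se: "(\<Sum>i\<in>I. e i * f (x i)) = c * f (x z)" for f :: "int \<Rightarrow> int"
      unfolding e_def c_def by (rule sum_e[OF insert(1)])
    have Se1: "(\<Sum>i\<in>I. e i) = c" using Se[of "\<lambda>_. 1"] by simp
    have ee: "e i * e i = e i" for i by (simp add: e_def)
    have L: "(\<Sum>i\<in>I. (ddS x (insert z I) (x i))^2) =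
       (\<Sum>i\<in>I. (ddS x I (x i))^2) + 2 * (\<Sum>i\<in>I. ddS x I (x i)) - 2 * (\<Sum>i\<in>I. e i * ddS x I (x i))
        + n - (\<Sum>i\<in>I. e i)"
    proof -
      have "(\<Sum>i\<in>I. (ddS x (insert z I) (x i))^2) = (\<Sum>i\<in>I. (ddS x I (x i))^2 + 2 * ddS x I (x i) - 2 * (e i * ddS x I (x i)) + 1 - e i)"
        by (intro sum.cong refl) (simp add: dI sgn_e power2_eq_square algebra_simps ee)
      also have "\<dots> = (\<Sum>i\<in>I. (ddS x I (x i))^2) + 2 * (\<Sum>i\<in>I. ddS x I (x i)) - 2 * (\<Sum>i\<in>I. e i * ddS x I (x i)) + n - (\<Sum>i\<in>I. e i)"
        by (simp add: sum.distrib sum_subtractf sum_distrib_left n_def)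
      finally show ?thesis .
    qed
    have R: "(\<Sum>i\<in>I. (cnt x (insert z I) (x i))^2) = (\<Sum>i\<in>I. (cnt x I (x i))^2) + 2 * (\<Sum>i\<in>I. e i * cnt x I (x i)) + (\<Sum>i\<in>I. e i)"
    proof -
      have "(\<Sum>i\<in>I. (cnt x (insert z I) (x i))^2) = (\<Sum>i\<in>I. (cnt x I (x i))^2 + 2 * (e i * cnt x I (x i)) + e i)"
        by (intro sum.cong refl) (auto simp: cI e_def power2_eq_square algebra_simps)
      also have "\<dots> = (\<Sum>i\<in>I. (cnt x I (x i))^2) + 2 * (\<Sum>i\<in>I. e i * cnt x I (x i)) + (\<Sum>i\<in>I. e i)"
        by (simp add: sum.distrib sum_distrib_left)
      finally show ?thesis .
    qed
    have dzz: "ddS x (insert z I) (x z) = c - n" using dI dz by simp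
    have czz: "cnt x (insert z I) (x z) = c + 1" using cI c_def by simp
    have sd: "(\<Sum>i\<in>I. e i * ddS x I (x i)) = c * (c - n)" using Se[of "ddS x I"] dz by simp
    have sc: "(\<Sum>i\<in>I. e i * cnt x I (x i)) = c * c" using Se[of "cnt x I"] c_def by simp
    have "3 * (\<Sum>i\<in>insert z I. (ddS x (insert z I) (x i))^2)
        = 3 * (\<Sum>i\<in>I. (ddS x I (x i))^2) + 3 * (2 * c * (n - c) + n - c) + 3 * (c - n)^2"
      unfolding sum.insert[OF insert(1) False] dzz L S0 sd Se1
      by (simp add: algebra_simps)
    also have "\<dots> = (n + 1)^3 - (\<Sum>i\<in>insert z I. (cnt x (insert z I) (x i))^2)"
      unfolding sum.insert[OF insert(1) False] czz R sc Se1 insert(3)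
      by (simp add: n_def[symmetric] power2_eq_square power3_eq_cube algebra_simps)
    finally show ?thesis using cardI' by simp
  qed
qed


lemma dd_ddS: "dd x n i = ddS x {..<n} (x i)"
  by (simp add: dd_def ddS_def)

definition KK :: "(nat \<Rightarrow> int) \<Rightarrow> nat \<Rightarrow> int" where
  "KK x n = (\<Sum>i<n. (cnt x {..<n} (x i))^2)"

lemma D2_formula: "3 * D2 x n = (int n)^3 - KK x n"
  using D2S[of "{..<n}" x] by (simp add: D2_def KK_def dd_ddS)

lemma step_eq_h: "step x n i = (\<lambda>v. v + ddS x {..<n} v) (x i)"
  by (simp add: step_def dd_ddS)

lemma step_image: "step x n ` {..<n} = (\<lambda>v. v + ddS x {..<n} v) ` (x ` {..<n})"
  by (auto simp: step_eq_h image_iff)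

lemma card_step_le: "card (step x n ` {..<n}) \<le> card (x ` {..<n})"
  unfolding step_image by (rule card_image_le) simp

lemma step_inj:
  assumes "card (step x n ` {..<n}) = card (x ` {..<n})" "i < n" "j < n"
  shows "step x n i = step x n j \<longleftrightarrow> x i = x j"
proof -
  have "inj_on (\<lambda>v. v + ddS x {..<n} v) (x ` {..<n})"
    using assms unfolding step_image by (intro eq_card_imp_inj_on) auto
  then show ?thesis
    unfolding step_eq_h using assms(2,3) inj_on_eq_iff[of "\<lambda>v. v + ddS x {..<n} v" "x ` {..<n}" "x i" "x j"]
    by auto
qed

lemma K_step:
  assumes "card (step x n ` {..<n}) = card (x ` {..<n})"
  shows "KK (step x n) n = KK x n"
proof -
  have "cnt (step x n) {..<n} (step x n i) = cnt x {..<n} (x i)" if "i < n" for i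
    unfolding cnt_def using step_inj[OF assms _ that] by (metis lessThan_iff)
  then show ?thesis by (simp add: KK_def)
qed

lemma D2_step:
  assumes "card (step x n ` {..<n}) = card (x ` {..<n})"
  shows "D2 (step x n) n = D2 x n"
  using D2_formula[of "step x n" n] D2_formula[of x n] K_step[OF assms] by simp

lemma W_two_step:
  assumes "card (step x n ` {..<n}) = card (x ` {..<n})"
  shows "WW (step (step x n) n) n = WW x n - 2 * int n *
     (\<Sum>i<n. \<Sum>j<n. \<bar>x i - x j\<bar> + \<bar>step x n i - step x n j\<bar> - \<bar>dd x n i - dd x n j\<bar>)"
proof -
  have e: "(\<Sum>i<n. \<Sum>j<n. \<bar>x i - x j\<bar> + \<bar>step x n i - step x n j\<bar> - \<bar>dd x n i - dd x n j\<bar>)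
    = S1 x n + S1 (step x n) n - 2 * D2 x n"
    by (simp add: S1_def sum_abs_dd[symmetric] sum.distrib sum_subtractf)
  show ?thesis unfolding e
    using W_step[of "step x n" n] W_step[of x n] D2_step[OF assms]
    by (simp add: algebra_simps)
qed

definition tightl :: "(nat \<Rightarrow> int) \<Rightarrow> nat \<Rightarrow> bool" where
  "tightl x n \<longleftrightarrow> (\<forall>i<n. \<forall>j<n. x i < x j \<longrightarrow> step x n j < step x n i)"

lemma two_step_main:
  assumes "card (step x n ` {..<n}) = card (x ` {..<n})"
  shows "WW (step (step x n) n) n \<le> WW x n"
    and "WW (step (step x n) n) n = WW x n \<Longrightarrow> tightl x n"
proof -
  define TS where "TS = (\<lambda>i j. \<bar>x i - x j\<bar> + \<bar>step x n i - step x n j\<bar> - \<bar>dd x n i - dd x n j\<bar>)"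
  have Tnn: "0 \<le> TS i j" for i j
    unfolding TS_def step_def by linarith
  have Snn: "0 \<le> (\<Sum>i<n. \<Sum>j<n. TS i j)"
    using Tnn by (simp add: sum_nonneg)
  have WW: "WW (step (step x n) n) n = WW x n - 2 * int n * (\<Sum>i<n. \<Sum>j<n. TS i j)"
    using W_two_step[OF assms] by (simp add: TS_def)
  show "WW (step (step x n) n) n \<le> WW x n"
    unfolding WW using Snn by simp
  assume eq: "WW (step (step x n) n) n = WW x n"
  show "tightl x n"
    unfolding tightl_def
  proof (intro allI impI)
    fix i j assume ij: "i < n" "j < n" "x i < x j"
    have "(\<Sum>i<n. \<Sum>j<n. TS i j) = 0" using eq WW ij by simp
    then have "(\<Sum>j<n. TS i j) = 0"
      using Tnn ij by (simp add: sum_nonneg_eq_0_iff sum_nonneg)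
    then have T0: "TS i j = 0"
      using Tnn ij by (simp add: sum_nonneg_eq_0_iff)
    have mono: "dd x n j < dd x n i" by (rule dd_mono) (use ij in auto)
    have ne: "step x n i \<noteq> step x n j" using step_inj[OF assms ij(1,2)] ij by simp
    from T0 mono ij ne show "step x n j < step x n i"
      unfolding TS_def step_def by linarith
  qed
qed


lemma tight_step_step:
  assumes "tightl x n" "i < n"
  shows "step (step x n) n i = x i"
proof -
  have "sgn (step x n j - step x n i) = sgn (x i - x j)" if "j < n" for j
  proof (cases "x i" "x j" rule: linorder_cases)
    case less then show ?thesis using assms that unfolding tightl_def by auto
  next
    case equal then show ?thesis by (simp add: step_eq_h)
  next
    case greater then show ?thesis using assms that unfolding tightl_def by auto
  qed
  then have "dd (step x n) n i = - dd x n i"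
    unfolding dd_def by (simp add: sum_negf[symmetric] sgn_swap[of "x i"])
  then show ?thesis by (simp add: step_def)
qed

definition dM :: "int multiset \<Rightarrow> int \<Rightarrow> int" where
  "dM M u = (\<Sum>z\<in>#M. sgn (z - u))"

definition tightM :: "int multiset \<Rightarrow> bool" where
  "tightM M \<longleftrightarrow> (\<forall>a\<in>#M. \<forall>b\<in>#M. a < b \<longrightarrow> b + dM M b < a + dM M a)"

definition Wm :: "int multiset \<Rightarrow> int" where
  "Wm M = (\<Sum>a\<in>#M. \<Sum>b\<in>#M. (a - b)^2)"

lemma set_mv: "set_mset (mv x n) = x ` {..<n}"
  by (simp add: mv_def)

lemma size_mv: "size (mv x n) = n"
  by (simp add: mv_def)

lemma dM_mv: "dM (mv x n) u = ddS x {..<n} u"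
  by (simp add: dM_def ddS_def sum_mset_mv)

lemma Wm_mv: "Wm (mv x n) = WW x n"
  by (simp add: Wm_def WW_def sum_mset_mv)

lemma tightM_mv: "tightM (mv x n) \<longleftrightarrow> tightl x n"
  unfolding tightM_def tightl_def set_mv dM_mv step_eq_h by auto

lemma card_fire_le: "card (set_mset (pd_fire M)) \<le> card (set_mset M)"
proof -
  obtain x where M: "M = mv x (size M)" using mv_exists by blast
  show ?thesis
    by (subst (1 2) M) (simp add: fire_mv set_mv card_step_le)
qed

lemma fire_two_main:
  assumes "card (set_mset (pd_fire M)) = card (set_mset M)"
  shows "Wm (pd_fire (pd_fire M)) \<le> Wm M"
    and "Wm (pd_fire (pd_fire M)) = Wm M \<Longrightarrow> tightM M"
proof -
  obtain x where M: "M = mv x (size M)" using mv_exists by blast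
  define n where "n = size M"
  have M': "M = mv x n" using M n_def by simp
  have c: "card (step x n ` {..<n}) = card (x ` {..<n})"
    using assms unfolding M' by (simp add: fire_mv set_mv)
  show "Wm (pd_fire (pd_fire M)) \<le> Wm M"
    unfolding M' fire_mv Wm_mv using two_step_main(1)[OF c] .
  assume "Wm (pd_fire (pd_fire M)) = Wm M"
  then show "tightM M"
    unfolding M' fire_mv Wm_mv tightM_mv using two_step_main(2)[OF c] by blast
qed

lemma tight_fire_fire: "tightM M \<Longrightarrow> pd_fire (pd_fire M) = M"
proof -
  assume t: "tightM M"
  obtain x where M: "M = mv x (size M)" using mv_exists by blast
  define n where "n = size M"
  have M': "M = mv x n" using M n_def by simp
  have tl: "tightl x n" using t unfolding M' tightM_mv .
  show ?thesis unfolding M' fire_mv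
    unfolding mv_def using tight_step_step[OF tl] by (intro image_mset_cong) auto
qed

lemma tight_period: "tightM M \<Longrightarrow> pd_period_config M"
  unfolding pd_period_config_def
  by (rule exI[of _ 2]) (simp add: tight_fire_fire numeral_2_eq_2)

lemma period_tight:
  assumes "pd_period_config M" shows "tightM M"
proof -
  obtain k where k: "k > 0" "(pd_fire ^^ k) M = M" using assms unfolding pd_period_config_def by blast
  define Ms where "Ms = (\<lambda>t. (pd_fire ^^ t) M)"
  define c where "c = (\<lambda>t. card (set_mset (Ms t)))"
  have Ms_Suc: "Ms (Suc t) = pd_fire (Ms t)" for t by (simp add: Ms_def)
  have per: "Ms (t * k) = M" for t
    by (induction t) (auto simp: Ms_def funpow_add k(2) add.commute)
  have anti: "c (t + d) \<le> c t" for t d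
  proof (induction d)
    case (Suc d)
    have "c (t + Suc d) \<le> c (t + d)" unfolding c_def by (simp add: Ms_Suc card_fire_le)
    then show ?case using Suc by simp
  qed simp
  have cconst: "c t = c 0" for t
  proof -
    have "t \<le> t * k" using k(1) by simp
    then have "c (t * k) \<le> c t" using anti[of t "t * k - t"] by simp
    moreover have "c (t * k) = c 0" unfolding c_def per by (simp add: Ms_def)
    moreover have "c t \<le> c 0" using anti[of 0 t] by simp
    ultimately show ?thesis by simp
  qed
  have cs: "card (set_mset (pd_fire (Ms t))) = card (set_mset (Ms t))" for t
    using cconst[of "Suc t"] cconst[of t] unfolding c_def Ms_Suc by simp
  have dec: "Wm (Ms (t + 2)) \<le> Wm (Ms t)" for t
    using fire_two_main(1)[OF cs[of t]] by (simp add: Ms_Suc numeral_2_eq_2)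
  have dec2: "Wm (Ms (2 * j + 2)) \<le> Wm (Ms 2)" for j
  proof (induction j)
    case (Suc j)
    have "Wm (Ms (2 * Suc j + 2)) \<le> Wm (Ms (2 * j + 2))"
      using dec[of "2 * j + 2"] by (simp add: algebra_simps)
    then show ?case using Suc by simp
  qed (simp add: numeral_2_eq_2)
  have "Ms (2 * (k - 1) + 2) = M" using per[of 2] k(1)
    by (metis add.commute mult.commute mult_2 mult_Suc_right Suc_diff_1 add_2_eq_Suc')
  then have "Wm M \<le> Wm (Ms 2)" using dec2[of "k - 1"] by simp
  moreover have "Wm (Ms 2) \<le> Wm M" using dec[of 0] by (simp add: Ms_def numeral_2_eq_2)
  ultimately have "Wm (pd_fire (pd_fire M)) = Wm M"
    by (simp add: Ms_def numeral_2_eq_2)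
  then show ?thesis using fire_two_main(2)[OF cs[of 0]] by (simp add: Ms_def)
qed

lemma period_iff_tight: "pd_period_config M \<longleftrightarrow> tightM M"
  using period_tight tight_period by blast


definition shft :: "int \<Rightarrow> int multiset \<Rightarrow> int multiset" where
  "shft c D = image_mset (\<lambda>x. x + c) D"

lemma shift_shift: "shft c (shft c' D) = shft (c + c') D"
  by (simp add: shft_def image_mset.compositionality o_def algebra_simps)

lemma shift_0[simp]: "shft 0 D = D"
  by (simp add: shft_def)

lemma dM_shift: "dM (shft c D) (u + c) = dM D u"
  by (simp add: dM_def shft_def image_mset.compositionality o_def)

lemma tight_shift: "tightM (shft c D) \<longleftrightarrow> tightM D"
  unfolding tightM_def
  by (auto simp: shft_def dM_shift[unfolded shft_def])

definition nrmz :: "int multiset \<Rightarrow> bool" where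
  "nrmz D \<longleftrightarrow> 0 \<in># D \<and> (\<forall>x\<in>#D. 0 \<le> x)"

definition TS :: "nat \<Rightarrow> int multiset set" where
  "TS n = {D. size D = n \<and> tightM D \<and> nrmz D}"

lemma equiv_image: "pd_equiv `` {D} = {N. \<exists>c. N = shft c D}"
  by (auto simp: pd_equiv_def shft_def)

lemma classes_eq:
  assumes "n \<ge> 1"
  shows "pd_period_configs n // pd_equiv = (\<lambda>D. pd_equiv `` {D}) ` TS n"
proof
  show "pd_period_configs n // pd_equiv \<subseteq> (\<lambda>D. pd_equiv `` {D}) ` TS n"
  proof
    fix X assume "X \<in> pd_period_configs n // pd_equiv"
    then obtain D where D: "D \<in> pd_period_configs n" "X = pd_equiv `` {D}"
      unfolding quotient_def by blast
    have sz: "size D = n" and tD: "tightM D"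
      using D(1) by (auto simp: pd_period_configs_def period_iff_tight)
    have ne: "set_mset D \<noteq> {}" using sz assms by auto
    define m where "m = Min (set_mset D)"
    have mD: "m \<in># D" using ne m_def by simp
    have mle: "\<forall>x\<in>#D. m \<le> x" using m_def by simp
    define D' where "D' = shft (- m) D"
    have "tightM D'" unfolding D'_def tight_shift using tD .
    then have "D' \<in> TS n"
      unfolding TS_def nrmz_def using sz mD mle
      by (auto simp: D'_def shft_def image_iff)
    moreover have "pd_equiv `` {D'} = X"
      unfolding D(2) equiv_image D'_def shift_shift
    proof (intro Collect_cong iffI)
      fix N assume "\<exists>c. N = shft (c + - m) D"
      then show "\<exists>c. N = shft c D" by blast
    next
      fix N assume "\<exists>c. N = shft c D"
      then obtain c where "N = shft c D" by blast
      then show "\<exists>c. N = shft (c + - m) D" by (intro exI[of _ "c + m"]) simp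
    qed
    ultimately show "X \<in> (\<lambda>D. pd_equiv `` {D}) ` TS n" by blast
  qed
next
  show "(\<lambda>D. pd_equiv `` {D}) ` TS n \<subseteq> pd_period_configs n // pd_equiv"
    unfolding quotient_def TS_def pd_period_configs_def by (auto simp: period_iff_tight)
qed

lemma classes_inj: "inj_on (\<lambda>D. pd_equiv `` {D}) (TS n)"
proof (rule inj_onI)
  fix D1 D2 assume D: "D1 \<in> TS n" "D2 \<in> TS n" "pd_equiv `` {D1} = pd_equiv `` {D2}"
  have "D2 \<in> pd_equiv `` {D2}" unfolding equiv_image by (auto intro: exI[of _ 0])
  then obtain c where c: "D2 = shft c D1" using D(3) unfolding equiv_image by auto
  have "0 \<in># D2" using D(2) by (simp add: TS_def nrmz_def)
  then obtain z where "z \<in># D1" "z + c = 0" using c by (auto simp: shft_def)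
  moreover have "z \<ge> 0" using D(1) \<open>z \<in># D1\<close> by (simp add: TS_def nrmz_def)
  ultimately have c1: "c \<le> 0" by simp
  have "0 \<in># D1" using D(1) by (simp add: TS_def nrmz_def)
  then have "c \<in># D2" using c by (force simp: shft_def)
  then have "c \<ge> 0" using D(2) by (simp add: TS_def nrmz_def)
  with c1 c show "D1 = D2" by simp
qed

lemma dM_bound: "\<bar>dM D u\<bar> \<le> int (size D)"
  unfolding dM_def by (induction D) (auto simp: sgn_if)

lemma T_bound:
  assumes "D \<in> TS n" "a \<in># D" shows "0 \<le> a \<and> a \<le> 2 * int n"
proof -
  have a0: "0 \<le> a" using assms by (simp add: TS_def nrmz_def)
  have "a \<le> 2 * int n"
  proof (cases "a = 0")
    case False
    have "0 \<in># D" "tightM D" "size D = n" using assms(1) by (auto simp: TS_def nrmz_def)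
    then have "a + dM D a < 0 + dM D 0" using assms(2) a0 False unfolding tightM_def by auto
    then show ?thesis using dM_bound[of D a] dM_bound[of D 0] \<open>size D = n\<close> by linarith
  qed simp
  with a0 show ?thesis by simp
qed

lemma T_finite: "finite (TS n)"
proof (rule finite_subset)
  show "TS n \<subseteq> multisets_of_size {0..2 * int n} n"
    unfolding multisets_of_size_def using T_bound by (auto simp: TS_def)
qed auto

lemma pd_count_T:
  assumes "n \<ge> 1"
  shows "pd_count n = card (TS n)" and "finite (pd_period_configs n // pd_equiv)"
  unfolding pd_count_def classes_eq[OF assms]
  using card_image[OF classes_inj] T_finite by auto


definition mx :: "int multiset \<Rightarrow> int" where "mx D = Max (set_mset D)"
definition cm :: "int multiset \<Rightarrow> nat" where "cm D = count D (mx D)"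

definition TT :: "nat \<Rightarrow> nat \<Rightarrow> int multiset set" where
  "TT n m = {D \<in> TS n. cm D = m}"

lemma dM_le_max: "(\<forall>z\<in>#D. z \<le> w) \<Longrightarrow> dM D w = int (count D w) - int (size D)"
  unfolding dM_def by (induction D) (auto simp: sgn_if)

lemma dM_gt: "(\<forall>z\<in>#D. z < v) \<Longrightarrow> dM D v = - int (size D)"
  unfolding dM_def by (induction D) (auto simp: sgn_if)

lemma dM_add_rep: "dM (D + replicate_mset m v) u = dM D u + int m * sgn (v - u)"
  unfolding dM_def by (induction m) (auto simp: algebra_simps)

lemma mx_le: "z \<in># D \<Longrightarrow> z \<le> mx D"
  unfolding mx_def by simp

lemma mx_in: "D \<noteq> {#} \<Longrightarrow> mx D \<in># D"
  unfolding mx_def by simp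

lemma mx_add_rep:
  assumes "\<forall>z\<in>#D0. z < v" "m > 0"
  shows "mx (D0 + replicate_mset m v) = v" "cm (D0 + replicate_mset m v) = m"
proof -
  have s: "set_mset (D0 + replicate_mset m v) = insert v (set_mset D0)"
    using assms by auto
  show "mx (D0 + replicate_mset m v) = v"
    unfolding mx_def s using assms(1) by (intro Max_eqI) auto
  then show "cm (D0 + replicate_mset m v) = m"
    unfolding cm_def using assms(1) by (auto simp: count_eq_zero_iff)
qed

lemma tight_add_max:
  assumes ne: "D0 \<noteq> {#}" and w: "w = mx D0" and wv: "w < v" and m: "m > 0"
  shows "tightM (D0 + replicate_mset m v) \<longleftrightarrow> tightM D0 \<and> v - w < int (count D0 w) + int m"
proof -
  let ?D = "D0 + replicate_mset m v"
  have all_lt: "\<forall>z\<in>#D0. z < v" using mx_le wv w by force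
  have all_le: "\<forall>z\<in>#D0. z \<le> w" using mx_le w by blast
  have wD0: "w \<in># D0" using mx_in[OF ne] w by simp
  have dD0: "dM ?D u = dM D0 u + int m" if "u \<in># D0" for u
    using all_lt that by (simp add: dM_add_rep)
  have dv: "dM ?D v = - int (size D0)"
    using dM_gt[OF all_lt] by (simp add: dM_add_rep)
  have dw: "dM D0 w = int (count D0 w) - int (size D0)" using dM_le_max[OF all_le] .
  have memD: "a \<in># ?D \<longleftrightarrow> a \<in># D0 \<or> a = v" for a using m by auto
  show ?thesis
  proof
    assume t: "tightM ?D"
    have "tightM D0"
      unfolding tightM_def
    proof (intro ballI impI)
      fix a b assume "a \<in># D0" "b \<in># D0" "a < b"
      then have "b + dM ?D b < a + dM ?D a" using t unfolding tightM_def by auto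
      then show "b + dM D0 b < a + dM D0 a" using dD0 \<open>a \<in># D0\<close> \<open>b \<in># D0\<close> by simp
    qed
    moreover have "v + dM ?D v < w + dM ?D w"
    proof -
      have "w \<in># ?D" "v \<in># ?D" using wD0 m by auto
      then show ?thesis using t wv unfolding tightM_def by blast
    qed
    then have "v - w < int (count D0 w) + int m" using dv dD0[OF wD0] dw by simp
    ultimately show "tightM D0 \<and> v - w < int (count D0 w) + int m" by blast
  next
    assume h: "tightM D0 \<and> v - w < int (count D0 w) + int m"
    show "tightM ?D"
      unfolding tightM_def
    proof (intro ballI impI)
      fix a b assume a: "a \<in># ?D" and b: "b \<in># ?D" and ab: "a < b"
      show "b + dM ?D b < a + dM ?D a"
      proof (cases "b = v")
        case True
        then have aD: "a \<in># D0" using a ab memD by auto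
        have "w + dM D0 w \<le> a + dM D0 a"
        proof (cases "a = w")
          case False
          then have "a < w" using all_le aD by force
          then show ?thesis using h aD wD0 unfolding tightM_def by force
        qed simp
        then show ?thesis using True dv dD0[OF aD] dw h by simp
      next
        case False
        then have bD: "b \<in># D0" using b memD by auto
        then have "a \<noteq> v" using all_lt ab by force
        then have aD: "a \<in># D0" using a memD by auto
        then show ?thesis using h bD ab dD0 unfolding tightM_def by force
      qed
    qed
  qed
qed


lemma count_size_rep: "count D a = size D \<Longrightarrow> D = replicate_mset (size D) a"
proof -
  assume c: "count D a = size D"
  have "D = {#y \<in># D. y = a#} + {#y \<in># D. \<not> y = a#}" by (rule multiset_partition)
  moreover have "size {#y \<in># D. y = a#} = size D" using c by (simp add: filter_eq_replicate_mset)
  ultimately have "{#y \<in># D. \<not> y = a#} = {#}"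
    by (metis add_left_cancel add.right_neutral size_union size_eq_0_iff_empty)
  then show ?thesis using c
    by (metis add.right_neutral filter_eq_replicate_mset multiset_partition)
qed

lemma T_nonempty: "D \<in> TS n \<Longrightarrow> D \<noteq> {#}"
  by (auto simp: TS_def nrmz_def)

lemma cm_range: "D \<in> TS j \<Longrightarrow> cm D \<in> {1..j}"
proof -
  assume D: "D \<in> TS j"
  have "mx D \<in># D" using mx_in T_nonempty[OF D] by blast
  then have "cm D \<ge> 1" unfolding cm_def by (simp add: Suc_le_eq)
  moreover have "cm D \<le> j" using D count_le_size[of D "mx D"] by (simp add: cm_def TS_def)
  ultimately show ?thesis by simp
qed

lemma TT_nn: assumes "n \<ge> 1" shows "TT n n = {replicate_mset n 0}"
proof
  show "TT n n \<subseteq> {replicate_mset n 0}"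
  proof
    fix D assume D: "D \<in> TT n n"
    then have sz: "size D = n" and c: "count D (mx D) = n" and z: "0 \<in># D"
      by (auto simp: TT_def TS_def cm_def nrmz_def)
    then have "D = replicate_mset n (mx D)" using count_size_rep[of D "mx D"] by simp
    moreover then have "mx D = 0" using z by (metis in_replicate_mset)
    ultimately show "D \<in> {replicate_mset n 0}" by simp
  qed
next
  have "mx (replicate_mset n 0) = 0" unfolding mx_def using assms by simp
  then show "{replicate_mset n 0} \<subseteq> TT n n"
    using assms by (auto simp: TT_def TS_def tightM_def nrmz_def cm_def)
qed

definition SG :: "nat \<Rightarrow> nat \<Rightarrow> (int multiset \<times> int) set" where
  "SG n m = (SIGMA D0:TS (n - m). {mx D0 + 1 ..< mx D0 + int (cm D0) + int m})"

lemma TT_image: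
  assumes "1 \<le> m" "m < n"
  shows "TT n m = (\<lambda>(D0, v). D0 + replicate_mset m v) ` SG n m"
proof
  show "(\<lambda>(D0, v). D0 + replicate_mset m v) ` SG n m \<subseteq> TT n m"
  proof clarify
    fix D0 v assume "(D0, v) \<in> SG n m"
    then have D0: "D0 \<in> TS (n - m)" and v1: "mx D0 < v" and v2: "v < mx D0 + int (cm D0) + int m"
      by (auto simp: SG_def)
    have ne: "D0 \<noteq> {#}" using T_nonempty[OF D0] .
    have all_lt: "\<forall>z\<in>#D0. z < v" using mx_le v1 by force
    have tD0: "tightM D0" and nD0: "nrmz D0" and sD0: "size D0 = n - m" using D0 by (auto simp: TS_def)
    have t: "tightM (D0 + replicate_mset m v)"
      using tight_add_max[OF ne refl v1] assms tD0 v2 by (simp add: cm_def)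
    have "0 \<le> mx D0" using nD0 mx_in[OF ne] by (simp add: nrmz_def)
    then have nr: "nrmz (D0 + replicate_mset m v)" using nD0 v1 by (auto simp: nrmz_def)
    show "D0 + replicate_mset m v \<in> TT n m"
      unfolding TT_def TS_def using t nr sD0 assms mx_add_rep(2)[OF all_lt] by auto
  qed
next
  show "TT n m \<subseteq> (\<lambda>(D0, v). D0 + replicate_mset m v) ` SG n m"
  proof
    fix D assume D: "D \<in> TT n m"
    then have sz: "size D = n" and tD: "tightM D" and nD: "nrmz D" and c: "count D (mx D) = m"
      by (auto simp: TT_def TS_def cm_def)
    define v where "v = mx D"
    define D0 where "D0 = {#z \<in># D. z < v#}"
    have le: "z \<in># D \<Longrightarrow> z \<le> v" for z using mx_le v_def by blast
    have Deq: "D = D0 + replicate_mset m v"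
    proof (rule multiset_eqI)
      fix z
      show "count D z = count (D0 + replicate_mset m v) z"
      proof (cases z v rule: linorder_cases)
        case less then show ?thesis by (simp add: D0_def)
      next
        case equal then show ?thesis using c by (simp add: D0_def v_def)
      next
        case greater
        then have "\<not> z \<in># D" using le[of z] by linarith
        then show ?thesis using greater by (simp add: D0_def count_eq_zero_iff)
      qed
    qed
    have all_lt: "\<forall>z\<in>#D0. z < v" by (simp add: D0_def)
    have sD0: "size D0 = n - m" using sz Deq by (metis add_diff_cancel_right' size_replicate_mset size_union)
    then have ne: "D0 \<noteq> {#}" using assms by auto
    have wv: "mx D0 < v" using all_lt mx_in[OF ne] by blast
    have m0: "m > 0" using assms by simp
    have tt: "tightM D0 \<and> v - mx D0 < int (count D0 (mx D0)) + int m"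
      using tight_add_max[OF ne refl wv m0] tD Deq by argo
    obtain z where z: "z \<in># D0" using ne by (cases D0) auto
    have zD: "z \<in># D" using z by (simp add: D0_def)
    have z0: "0 \<le> z" using nD zD unfolding nrmz_def by blast
    have zv: "z < v" using all_lt z by blast
    have D0in: "0 \<in># D" using nD unfolding nrmz_def by blast
    have "0 \<in># D0" unfolding D0_def using D0in z0 zv by simp
    moreover have "\<forall>x\<in>#D0. 0 \<le> x" using nD unfolding nrmz_def D0_def by simp
    ultimately have nD0: "nrmz D0" unfolding nrmz_def by blast
    have "(D0, v) \<in> SG n m"
      unfolding SG_def TS_def using sD0 tt nD0 wv by (auto simp: cm_def)
    then show "D \<in> (\<lambda>(D0, v). D0 + replicate_mset m v) ` SG n m"
      using Deq by force
  qed
qed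

lemma TT_inj:
  assumes "1 \<le> m" "m < n"
  shows "inj_on (\<lambda>(D0, v). D0 + replicate_mset m v) (SG n m)"
proof (rule inj_onI, clarify)
  fix D0 v D1 w
  assume a: "(D0, v) \<in> SG n m" "(D1, w) \<in> SG n m" and eq: "D0 + replicate_mset m v = D1 + replicate_mset m w"
  have lt0: "\<forall>z\<in>#D0. z < v" using a(1) mx_le by (force simp: SG_def)
  have lt1: "\<forall>z\<in>#D1. z < w" using a(2) mx_le by (force simp: SG_def)
  have m0: "m > 0" using assms by simp
  have "v = w" using mx_add_rep(1)[OF lt0 m0] mx_add_rep(1)[OF lt1 m0] eq by metis
  then show "D0 = D1 \<and> v = w" using eq by simp
qed

lemma card_TT:
  assumes "1 \<le> m" "m < n"
  shows "card (TT n m) = (\<Sum>D0\<in>TS (n - m). cm D0 + m - 1)"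
proof -
  have "card (TT n m) = card (SG n m)"
    unfolding TT_image[OF assms] by (rule card_image[OF TT_inj[OF assms]])
  also have "\<dots> = (\<Sum>D0\<in>TS (n - m). card {mx D0 + 1 ..< mx D0 + int (cm D0) + int m})"
    unfolding SG_def by (rule card_SigmaI) (auto simp: T_finite)
  also have "\<dots> = (\<Sum>D0\<in>TS (n - m). cm D0 + m - 1)"
  proof (intro sum.cong refl)
    fix D0 show "card {mx D0 + 1 ..< mx D0 + int (cm D0) + int m} = cm D0 + m - 1"
      by simp
  qed
  finally show ?thesis .
qed

lemma sum_group_cm:
  assumes "j \<ge> 1"
  shows "(\<Sum>D0\<in>TS j. f (cm D0)) = (\<Sum>m'=1..j. card (TT j m') * f m')"
proof -
  have "(\<Sum>D0\<in>TS j. f (cm D0)) = (\<Sum>m'\<in>{1..j}. \<Sum>D0\<in>{D0 \<in> TS j. cm D0 = m'}. f (cm D0))"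
    using cm_range[of _ j] by (intro sum.group[symmetric]) (auto simp: T_finite)
  also have "\<dots> = (\<Sum>m'=1..j. card (TT j m') * f m')"
    by (intro sum.cong refl) (simp add: TT_def)
  finally show ?thesis .
qed

definition Aseq :: "nat \<Rightarrow> nat" where "Aseq j = card (TS j)"
definition Bseq :: "nat \<Rightarrow> nat" where "Bseq j = (\<Sum>m'=1..j. m' * card (TT j m'))"

lemma T0: "TS 0 = {}" by (auto simp: TS_def nrmz_def)

lemma Aseq_sum: "Aseq j = (\<Sum>m'=1..j. card (TT j m'))"
proof (cases "j \<ge> 1")
  case True then show ?thesis using sum_group_cm[OF True, of "\<lambda>_. 1"] by (simp add: Aseq_def)
next
  case False then have "j = 0" by simp
  then show ?thesis by (simp add: Aseq_def T0)
qed

lemma card_TT_formula: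
  assumes "1 \<le> m" "m \<le> n"
  shows "card (TT n m) = (if m = n then 1 else 0) + Bseq (n - m) + (m - 1) * Aseq (n - m)"
proof (cases "m = n")
  case True
  then show ?thesis using TT_nn assms by (simp add: Bseq_def Aseq_def T0)
next
  case False
  then have mn: "m < n" using assms by simp
  have "card (TT n m) = (\<Sum>D0\<in>TS (n - m). cm D0 + m - 1)" by (rule card_TT[OF assms(1) mn])
  also have "\<dots> = (\<Sum>m'=1..n-m. card (TT (n - m) m') * (m' + m - 1))"
    using mn by (intro sum_group_cm) simp
  also have "\<dots> = (\<Sum>m'=1..n-m. m' * card (TT (n - m) m')) + (m - 1) * (\<Sum>m'=1..n-m. card (TT (n - m) m'))"
  proof -
    have "(\<Sum>m'=1..n-m. card (TT (n - m) m') * (m' + m - 1)) = (\<Sum>m'=1..n-m. m' * card (TT (n - m) m') + (m - 1) * card (TT (n - m) m'))"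
      using assms(1) by (intro sum.cong refl) (simp add: algebra_simps)
    then show ?thesis by (simp only: sum.distrib sum_distrib_left)
  qed
  also have "\<dots> = Bseq (n - m) + (m - 1) * Aseq (n - m)"
    by (simp add: Bseq_def Aseq_sum)
  finally show ?thesis using False by simp
qed


unbundle fps_syntax



lemma sum_shift0: "(\<Sum>i=0..n. g i) = (\<Sum>i=1..n. g i)" if "g 0 = (0::int)" for n :: nat
  using that by (simp add: sum.atLeast_Suc_atMost[of 0 n g, simplified])

lemma one_minus_X_mult_nth:
  "((1 - fps_X) * f) $ n = f $ n - (if n = 0 then 0 else f $ (n - 1))" for f :: "int fps"
  by (simp add: left_diff_distrib)

lemma Q_nth:
  "((1 - 5 * fps_X + 7 * fps_X^2 - 4 * fps_X^3) * f) $ n =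
     f $ n - 5 * (if n < 1 then 0 else f $ (n - 1)) + 7 * (if n < 2 then 0 else f $ (n - 2))
     - 4 * (if n < 3 then 0 else f $ (n - 3))" for f :: "int fps"
proof -
  have "(1 - 5 * fps_X + 7 * fps_X^2 - 4 * fps_X^3) * f =
        f - fps_const 5 * (fps_X^1 * f) + fps_const 7 * (fps_X^2 * f) - fps_const 4 * (fps_X^3 * f)"
    by (simp add: algebra_simps fps_numeral_fps_const)
  then show ?thesis by (simp only: fps_sub_nth fps_add_nth fps_mult_left_const_nth fps_X_power_mult_nth)
qed

lemma R_nth:
  "(fps_X * (1 - fps_X)^3 :: int fps) $ n =
     (if n = 1 then 1 else 0) - 3 * (if n = 2 then 1 else 0) + 3 * (if n = 3 then 1 else 0) - (if n = 4 then 1 else 0)"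
proof -
  have "(fps_X * (1 - fps_X)^3 :: int fps) = fps_X^1 - fps_const 3 * fps_X^2 + fps_const 3 * fps_X^3 - fps_X^4"
    by (simp add: algebra_simps power2_eq_square power3_eq_cube power4_eq_xxxx fps_numeral_fps_const[symmetric])
  then show ?thesis by (simp only: fps_sub_nth fps_add_nth fps_mult_left_const_nth fps_X_power_nth)
qed

lemma gen_rec:
  fixes a b :: "nat \<Rightarrow> int"
  assumes a0: "a 0 = 0" and b0: "b 0 = 0"
  and ca: "\<And>n. n \<ge> 1 \<Longrightarrow> a n = 1 + (\<Sum>m=1..n. b (n-m)) + (\<Sum>m=1..n. (int m - 1) * a (n-m))"
  and cb: "\<And>n. n \<ge> 1 \<Longrightarrow> b n = int n + (\<Sum>m=1..n. int m * b (n-m)) + (\<Sum>m=1..n. int m * (int m - 1) * a (n-m))"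
  shows "a 1 = 1 \<and> a 2 = 2 \<and> a 3 = 6 \<and> a 4 = 19 \<and> (\<forall>n\<ge>5. a n = 5 * a (n-1) - 7 * a (n-2) + 4 * a (n-3))"
proof -
  define X :: "int fps" where "X = fps_X"
  define A where "A = Abs_fps a"
  define B where "B = Abs_fps b"
  define K1 :: "int fps" where "K1 = Abs_fps (\<lambda>i. if i = 0 then 0 else 1)"
  define K2 :: "int fps" where "K2 = Abs_fps (\<lambda>i. if i = 0 then 0 else int i - 1)"
  define K3 :: "int fps" where "K3 = Abs_fps (\<lambda>i. int i)"
  define K4 :: "int fps" where "K4 = Abs_fps (\<lambda>i. int i * (int i - 1))"
  have EA: "A = K1 + K1 * B + K2 * A"
  proof (rule fps_ext)
    fix n
    show "A $ n = (K1 + K1 * B + K2 * A) $ n"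
    proof (cases "n = 0")
      case True then show ?thesis by (simp add: A_def B_def K1_def K2_def fps_mult_nth a0)
    next
      case False
      have s1: "(K1 * B) $ n = (\<Sum>m=1..n. b (n-m))"
        unfolding fps_mult_nth by (subst sum_shift0) (auto simp: K1_def B_def intro: sum.cong)
      have s2: "(K2 * A) $ n = (\<Sum>m=1..n. (int m - 1) * a (n-m))"
        unfolding fps_mult_nth by (subst sum_shift0) (auto simp: K2_def A_def intro: sum.cong)
      show ?thesis using False ca[of n] s1 s2 by (simp add: A_def K1_def)
    qed
  qed
  have EB: "B = K3 + K3 * B + K4 * A"
  proof (rule fps_ext)
    fix n
    show "B $ n = (K3 + K3 * B + K4 * A) $ n"
    proof (cases "n = 0")
      case True then show ?thesis by (simp add: A_def B_def K3_def K4_def fps_mult_nth b0)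
    next
      case False
      have s1: "(K3 * B) $ n = (\<Sum>m=1..n. int m * b (n-m))"
        unfolding fps_mult_nth by (subst sum_shift0) (auto simp: K3_def B_def intro: sum.cong)
      have s2: "(K4 * A) $ n = (\<Sum>m=1..n. int m * (int m - 1) * a (n-m))"
        unfolding fps_mult_nth by (subst sum_shift0) (auto simp: K4_def A_def intro: sum.cong)
      show ?thesis using False cb[of n] s1 s2 by (simp add: B_def K3_def)
    qed
  qed
  have k1: "(1 - X) * K1 = X"
    by (rule fps_ext) (auto simp: one_minus_X_mult_nth X_def K1_def)
  have k2: "(1 - X) * K2 = X * K1"
    by (rule fps_ext) (auto simp: one_minus_X_mult_nth X_def K1_def K2_def)
  have k3: "(1 - X) * K3 = K1"
    by (rule fps_ext) (auto simp: one_minus_X_mult_nth X_def K1_def K3_def of_nat_diff)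
  have k4: "(1 - X) * K4 = 2 * K2"
  proof (rule fps_ext)
    fix n show "((1 - X) * K4) $ n = (2 * K2) $ n"
      by (cases n) (auto simp: one_minus_X_mult_nth X_def K4_def K2_def fps_numeral_fps_const algebra_simps)
  qed
  have k2': "(1 - X) * ((1 - X) * K2) = X^2"
    using k1 k2 by (metis mult.left_commute power2_eq_square)
  have k3': "(1 - X) * ((1 - X) * K3) = X" using k1 k3 by simp
  have k4': "(1 - X) * ((1 - X) * ((1 - X) * K4)) = 2 * X^2"
    using k4 k2' by (simp add: mult.left_commute[of "1 - X" 2])
  have E1: "(1 - X)^2 * A = X * (1 - X) + X * (1 - X) * B + X^2 * A"
  proof -
    have "(1 - X)^2 * A = (1 - X)^2 * (K1 + K1 * B + K2 * A)"
      using arg_cong[of _ _ "\<lambda>t. (1 - X)^2 * t", OF EA] .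
    also have "\<dots> = (1 - X) * ((1 - X) * K1) + (1 - X) * ((1 - X) * K1) * B + (1 - X) * ((1 - X) * K2) * A"
      by (simp add: algebra_simps power2_eq_square)
    also have "\<dots> = X * (1 - X) + X * (1 - X) * B + X^2 * A"
      unfolding k1 k2' by (simp add: mult.commute)
    finally show ?thesis .
  qed
  have E2: "(1 - X)^3 * B = X * (1 - X) + X * (1 - X) * B + 2 * X^2 * A"
  proof -
    have "(1 - X)^3 * B = (1 - X)^3 * (K3 + K3 * B + K4 * A)"
      using arg_cong[of _ _ "\<lambda>t. (1 - X)^3 * t", OF EB] .
    also have "\<dots> = (1 - X) * ((1 - X) * ((1 - X) * K3)) + (1 - X) * ((1 - X) * ((1 - X) * K3)) * B
        + (1 - X) * ((1 - X) * ((1 - X) * K4)) * A"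
      by (simp add: algebra_simps power3_eq_cube)
    also have "\<dots> = X * (1 - X) + X * (1 - X) * B + 2 * X^2 * A"
      unfolding k3' k4' by (simp add: mult.commute)
    finally show ?thesis .
  qed
  have QA: "(1 - 5 * X + 7 * X^2 - 4 * X^3) * A = X * (1 - X)^3"
  proof -
    have "(1 - 5 * X + 7 * X^2 - 4 * X^3) * A - X * (1 - X)^3 =
      (1 - 3 * X + X^2) * ((1 - X)^2 * A - (X * (1 - X) + X * (1 - X) * B + X^2 * A))
      + X * ((1 - X)^3 * B - (X * (1 - X) + X * (1 - X) * B + 2 * X^2 * A))"
      by (simp add: algebra_simps power2_eq_square power3_eq_cube)
    also have "\<dots> = 0" using E1 E2 by simp
    finally show ?thesis by simp
  qed
  have coef: "a n - 5 * (if n < 1 then 0 else a (n - 1)) + 7 * (if n < 2 then 0 else a (n - 2))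
     - 4 * (if n < 3 then 0 else a (n - 3)) =
     (if n = 1 then 1 else 0) - 3 * (if n = 2 then 1 else 0) + 3 * (if n = 3 then 1 else 0) - (if n = 4 then 1 else 0)" for n
    using arg_cong[of _ _ "\<lambda>f. f $ n", OF QA] unfolding X_def Q_nth R_nth A_def fps_nth_Abs_fps .
  have c1: "a 1 = 1" using coef[of 1] a0 by simp
  have c2: "a 2 = 2" using coef[of 2] c1 a0 by simp
  have c3: "a 3 = 6" using coef[of 3] c1 c2 a0 by (simp add: numeral_eq_Suc)
  have c4: "a 4 = 19" using coef[of 4] c1 c2 c3 by (simp add: numeral_eq_Suc)
  have "\<forall>n\<ge>5. a n = 5 * a (n-1) - 7 * a (n-2) + 4 * a (n-3)"
  proof (intro allI impI)
    fix n :: nat assume "n \<ge> 5"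
    then show "a n = 5 * a (n-1) - 7 * a (n-2) + 4 * a (n-3)" using coef[of n] by simp
  qed
  then show ?thesis using c1 c2 c3 c4 by simp
qed


lemma Aseq0[simp]: "Aseq 0 = 0" by (simp add: Aseq_def T0)
lemma Bseq0[simp]: "Bseq 0 = 0" by (simp add: Bseq_def)

lemma card_TT_int:
  assumes "1 \<le> m" "m \<le> n"
  shows "int (card (TT n m)) = (if m = n then 1 else 0) + int (Bseq (n-m)) + (int m - 1) * int (Aseq (n-m))"
  using card_TT_formula[OF assms] assms by (simp add: of_nat_diff)

lemma ca_lem:
  assumes "n \<ge> 1"
  shows "int (Aseq n) = 1 + (\<Sum>m=1..n. int (Bseq (n-m))) + (\<Sum>m=1..n. (int m - 1) * int (Aseq (n-m)))"
proof -
  have "int (Aseq n) = (\<Sum>m=1..n. int (card (TT n m)))" by (simp add: Aseq_sum)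
  also have "\<dots> = (\<Sum>m=1..n. (if m = n then 1 else 0) + int (Bseq (n-m)) + (int m - 1) * int (Aseq (n-m)))"
    by (intro sum.cong refl) (auto simp: card_TT_formula of_nat_diff)
  also have "\<dots> = (\<Sum>m=1..n. (if m = n then 1 else 0 :: int)) + (\<Sum>m=1..n. int (Bseq (n-m))) + (\<Sum>m=1..n. (int m - 1) * int (Aseq (n-m)))"
    by (simp add: sum.distrib)
  also have "(\<Sum>m=1..n. (if m = n then 1 else 0 :: int)) = 1" using assms by simp
  finally show ?thesis .
qed

lemma cb_lem:
  assumes "n \<ge> 1"
  shows "int (Bseq n) = int n + (\<Sum>m=1..n. int m * int (Bseq (n-m))) + (\<Sum>m=1..n. int m * (int m - 1) * int (Aseq (n-m)))"
proof -
  have "int (Bseq n) = (\<Sum>m=1..n. int m * int (card (TT n m)))" by (simp add: Bseq_def)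
  also have "\<dots> = (\<Sum>m=1..n. (if m = n then int n else 0) + int m * int (Bseq (n-m)) + int m * (int m - 1) * int (Aseq (n-m)))"
  proof (intro sum.cong refl)
    fix m assume m: "m \<in> {1..n}"
    have e: "int (card (TT n m)) = (if m = n then 1 else 0) + int (Bseq (n-m)) + (int m - 1) * int (Aseq (n-m))"
      using m by (intro card_TT_int) auto
    show "int m * int (card (TT n m)) = (if m = n then int n else 0) + int m * int (Bseq (n-m)) + int m * (int m - 1) * int (Aseq (n-m))"
      unfolding e by (cases "m = n") (simp_all add: distrib_left mult.assoc)
  qed
  also have "\<dots> = (\<Sum>m=1..n. (if m = n then int n else 0)) + (\<Sum>m=1..n. int m * int (Bseq (n-m))) + (\<Sum>m=1..n. int m * (int m - 1) * int (Aseq (n-m)))"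
    by (simp add: sum.distrib)
  also have "(\<Sum>m=1..n. (if m = n then int n else 0)) = int n" using assms by simp
  finally show ?thesis .
qed

theorem corollary4p3:
  shows "(\<forall>n\<ge>1. finite (pd_period_configs n // pd_equiv))
    \<and> pd_count 1 = 1 \<and> pd_count 2 = 2 \<and> pd_count 3 = 6 \<and> pd_count 4 = 19
    \<and> (\<forall>n\<ge>5. int (pd_count n) = 5 * int (pd_count (n - 1)) - 7 * int (pd_count (n - 2))
                                  + 4 * int (pd_count (n - 3)))"
proof -
  have A0: "Aseq 0 = 0" by (simp add: Aseq_def T0)
  have B0: "Bseq 0 = 0" by (simp add: Bseq_def)
  have G: "int (Aseq 1) = 1 \<and> int (Aseq 2) = 2 \<and> int (Aseq 3) = 6 \<and> int (Aseq 4) = 19 \<and>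
    (\<forall>n\<ge>5. int (Aseq n) = 5 * int (Aseq (n-1)) - 7 * int (Aseq (n-2)) + 4 * int (Aseq (n-3)))"
    using gen_rec[of "\<lambda>n. int (Aseq n)" "\<lambda>n. int (Bseq n)"] A0 B0 ca_lem cb_lem by simp
  have pc: "pd_count n = Aseq n" if "n \<ge> 1" for n
    using pd_count_T(1)[OF that] by (simp add: Aseq_def)
  have fin: "\<forall>n\<ge>1. finite (pd_period_configs n // pd_equiv)"
    using pd_count_T(2) by blast
  have rec: "\<forall>n\<ge>5. int (pd_count n) = 5 * int (pd_count (n - 1)) - 7 * int (pd_count (n - 2))
                                  + 4 * int (pd_count (n - 3))"
  proof (intro allI impI)
    fix n :: nat assume n: "n \<ge> 5"
    then show "int (pd_count n) = 5 * int (pd_count (n - 1)) - 7 * int (pd_count (n - 2)) + 4 * int (pd_count (n - 3))"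
      using G pc[of n] pc[of "n-1"] pc[of "n-2"] pc[of "n-3"] by simp
  qed
  show ?thesis using fin rec G pc[of 1] pc[of 2] pc[of 3] pc[of 4] by simp
qed

end
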